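(* For every prime $p\geq 17$, the group $PSL_2(p)$ does not satisfy the Amit–Vishne condition: there exist $g,h\in PSL_2(p)$ with $\langle g\rangle=\langle h\rangle$ such that no automorphism of $PSL_2(p)$ maps $g$ to $h$.
   Context: A finite group $G$ satisfies the Amit–Vishne condition if whenever $g,h\in G$ satisfy $\langle g\rangle=\langle h\rangle$, there is $\alpha\in\mathrm{Aut}(G)$ with $\alpha(g)=h$. *)

theory Defs
  imports "HOL-Algebra.Algebra"
begin

text \<open>2x2 matrices over Z/pZ, represented as quadruples (a,b,c,d) standing for
  the matrix [[a,b],[c,d]], with entries normalised to {0..<p}.\<close>

type_synonym mat2 = "int \<times> int \<times> int \<times> int"

definition mat2_mult :: "nat \<Rightarrow> mat2 \<Rightarrow> mat2 \<Rightarrow> mat2" where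
  "mat2_mult p A B = (case A of (a, b, c, d) \<Rightarrow> case B of (e, f, g, h) \<Rightarrow>
     ((a*e + b*g) mod int p, (a*f + b*h) mod int p,
      (c*e + d*g) mod int p, (c*f + d*h) mod int p))"

definition SL2_carrier :: "nat \<Rightarrow> mat2 set" where
  "SL2_carrier p = {(x, y, z, w). 0 \<le> x \<and> x < int p \<and> 0 \<le> y \<and> y < int p \<and>
      0 \<le> z \<and> z < int p \<and> 0 \<le> w \<and> w < int p \<and> (x*w - y*z) mod int p = 1}"

definition SL2 :: "nat \<Rightarrow> mat2 monoid" where
  "SL2 p = \<lparr>carrier = SL2_carrier p, monoid.mult = mat2_mult p, one = (1, 0, 0, 1)\<rparr>"

definition SL2_center :: "nat \<Rightarrow> mat2 set" where
  "SL2_center p = {(1, 0, 0, 1), (int p - 1, 0, 0, int p - 1)}"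

definition PSL2 :: "nat \<Rightarrow> mat2 set monoid" where
  "PSL2 p = SL2 p Mod SL2_center p"

definition amit_vishne :: "('a, 'b) monoid_scheme \<Rightarrow> bool" where
  "amit_vishne G \<longleftrightarrow> (\<forall>g \<in> carrier G. \<forall>h \<in> carrier G.
      generate G {g} = generate G {h} \<longrightarrow> (\<exists>\<alpha> \<in> iso G G. \<alpha> g = h))"

end

theory Submission
  imports Defs "HOL-Computational_Algebra.Primes"
begin

definition mm :: "mat2 \<Rightarrow> mat2 \<Rightarrow> mat2" where
 "mm A B = (case A of (a,b,c,d) \<Rightarrow> case B of (e,f,g,h) \<Rightarrow> (a*e+b*g, a*f+b*h, c*e+d*g, c*f+d*h))"
definition md :: "nat \<Rightarrow> mat2 \<Rightarrow> mat2" where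
 "md p A = (case A of (a,b,c,d) \<Rightarrow> (a mod int p, b mod int p, c mod int p, d mod int p))"
definition ng :: "mat2 \<Rightarrow> mat2" where "ng A = (case A of (a,b,c,d) \<Rightarrow> (-a,-b,-c,-d))"
definition adj :: "mat2 \<Rightarrow> mat2" where "adj A = (case A of (a,b,c,d) \<Rightarrow> (d,-b,-c,a))"
definition tr :: "mat2 \<Rightarrow> int" where "tr A = (case A of (a,b,c,d) \<Rightarrow> a+d)"
definition det2 :: "mat2 \<Rightarrow> int" where "det2 A = (case A of (a,b,c,d) \<Rightarrow> a * d - b * c)"
definition pii :: "nat \<Rightarrow> mat2 \<Rightarrow> mat2 set" where "pii p A = {md p A, md p (ng A)}"
definition I2 :: mat2 where "I2 = (1,0,0,1)"

lemma mm_simp[simp]: "mm (a,b,c,d) (e,f,g,h) = (a*e+b*g, a*f+b*h, c*e+d*g, c*f+d*h)"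
  by (simp add: mm_def)
lemma md_simp[simp]: "md p (a,b,c,d) = (a mod int p, b mod int p, c mod int p, d mod int p)"
  by (simp add: md_def)
lemma ng_simp[simp]: "ng (a,b,c,d) = (-a,-b,-c,-d)" by (simp add: ng_def)
lemma adj_simp[simp]: "adj (a,b,c,d) = (d,-b,-c,a)" by (simp add: adj_def)
lemma tr_simp[simp]: "tr (a,b,c,d) = a+d" by (simp add: tr_def)
lemma det2_simp[simp]: "det2 (a,b,c,d) = a * d - b * c" by (simp add: det2_def)

lemma mult_eq: "mat2_mult p A B = md p (mm A B)"
  by (cases A; cases B) (auto simp: mat2_mult_def)

lemma mm_assoc: "mm (mm A B) C = mm A (mm B C)"
  by (cases A; cases B; cases C) (auto simp: algebra_simps)

lemma md_eq_iff: "md p (a,b,c,d) = md p (e,f,g,h) \<longleftrightarrow>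
   int p dvd a - e \<and> int p dvd b - f \<and> int p dvd c - g \<and> int p dvd d - h"
  by (simp add: mod_eq_dvd_iff)

lemma md_md[simp]: "md p (md p A) = md p A"
  by (cases A) auto

lemma mdv: "(n::int) dvd (a mod n - a)"
  by (simp add: mod_eq_dvd_iff[symmetric])

lemma t1: "((a::int) mod n * e + b mod n * g) mod n = (a*e + b*g) mod n"
  by (metis mod_add_eq mod_mult_left_eq)
lemma t2: "((a::int) * (e mod n) + b * (g mod n)) mod n = (a*e + b*g) mod n"
  by (metis mod_add_eq mod_mult_right_eq)

lemma md_mm_left[simp]: "md p (mm (md p A) B) = md p (mm A B)"
  by (cases A; cases B) (simp add: t1)
lemma md_mm_right[simp]: "md p (mm A (md p B)) = md p (mm A B)"
  by (cases A; cases B) (simp add: t2)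
lemma md_ng[simp]: "md p (ng (md p A)) = md p (ng A)"
  by (cases A) (auto simp: mod_minus_eq)
lemma md_ng_mm_right[simp]: "md p (ng (mm A (md p B))) = md p (ng (mm A B))"
  by (metis md_ng md_mm_right)
lemma md_ng_mm_left[simp]: "md p (ng (mm (md p A) B)) = md p (ng (mm A B))"
  by (metis md_ng md_mm_left)
lemma mm_ng_left[simp]: "mm (ng A) B = ng (mm A B)"
  by (cases A; cases B) auto
lemma mm_ng_right[simp]: "mm A (ng B) = ng (mm A B)"
  by (cases A; cases B) auto
lemma ng_ng[simp]: "ng (ng A) = A" by (cases A) auto
lemma mm_I2_left[simp]: "mm I2 A = A" by (cases A) (auto simp: I2_def)
lemma mm_I2_right[simp]: "mm A I2 = A" by (cases A) (auto simp: I2_def)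
lemma det2_mm: "det2 (mm A B) = det2 A * det2 B"
  by (cases A; cases B) (auto simp: algebra_simps)
lemma adj_mm: "mm (adj A) A = (det2 A, 0, 0, det2 A)"
  by (cases A) (auto simp: algebra_simps)
lemma adj_mm2: "mm A (adj A) = (det2 A, 0, 0, det2 A)"
  by (cases A) (auto simp: algebra_simps)
lemma det2_adj[simp]: "det2 (adj A) = det2 A"
  by (cases A) (auto simp: algebra_simps)
lemma det2_ng[simp]: "det2 (ng A) = det2 A"
  by (cases A) (auto simp: algebra_simps)

lemma det_cong: "(n::int) dvd a1 - a \<Longrightarrow> n dvd b1 - b \<Longrightarrow> n dvd c1 - c \<Longrightarrow> n dvd d1 - d \<Longrightarrow>
   n dvd (a1 * d1 - b1 * c1) - (a * d - b * c)"
  unfolding dvd_def by Groebner_Basis.algebra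

lemma det2_md: "int p dvd det2 (md p A) - det2 A"
proof -
  obtain a b c d where A: "A = (a,b,c,d)" by (cases A) auto
  show ?thesis unfolding A md_simp det2_simp by (intro det_cong mdv)
qed

lemma dv_mul1': "(n::int) dvd a - c * d \<Longrightarrow> n dvd c - 1 \<Longrightarrow> n dvd d - 1 \<Longrightarrow> n dvd a - 1"
  unfolding dvd_def by Groebner_Basis.algebra

lemma dv_mul1: "(n::int) dvd a - b \<Longrightarrow> b = c * d \<Longrightarrow> n dvd c - 1 \<Longrightarrow> n dvd d - 1 \<Longrightarrow> n dvd a - 1"
  using dv_mul1' by blast

lemma mod_self_iff: "(b::int) > 0 \<Longrightarrow> a mod b = a \<longleftrightarrow> 0 \<le> a \<and> a < b"
  by (metis mod_pos_pos_trivial pos_mod_bound pos_mod_sign)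

lemma md_self_iff: "p > 0 \<Longrightarrow> md p (x,y,z,w) = (x,y,z,w) \<longleftrightarrow>
   0 \<le> x \<and> x < int p \<and> 0 \<le> y \<and> y < int p \<and> 0 \<le> z \<and> z < int p \<and> 0 \<le> w \<and> w < int p"
  by (simp add: mod_self_iff)

lemma SL2_iff: assumes "p > 1" shows "A \<in> SL2_carrier p \<longleftrightarrow> md p A = A \<and> int p dvd det2 A - 1"
proof -
  obtain x y z w where A: "A = (x,y,z,w)" by (cases A) auto
  have 1: "(1::int) mod int p = 1" using assms by simp
  have "(x*w - y*z) mod int p = 1 \<longleftrightarrow> int p dvd (x*w - y*z) - 1"
    using 1 mod_eq_dvd_iff[of "x*w - y*z" "int p" 1] by simp
  then show ?thesis unfolding A SL2_carrier_def using md_self_iff[of p x y z w] assms by auto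
qed

lemma SL2_group: assumes p: "p > 1" shows "group (SL2 p)"
proof (rule groupI)
  fix x y assume x: "x \<in> carrier (SL2 p)" and y: "y \<in> carrier (SL2 p)"
  have "int p dvd det2 (md p (mm x y)) - 1"
    using dv_mul1[OF det2_md det2_mm] x y SL2_iff[OF p] by (auto simp: SL2_def)
  then show "x \<otimes>\<^bsub>SL2 p\<^esub> y \<in> carrier (SL2 p)"
    by (simp add: SL2_def mult_eq SL2_iff[OF p])
next
  show "\<one>\<^bsub>SL2 p\<^esub> \<in> carrier (SL2 p)"
    using p by (simp add: SL2_def SL2_carrier_def)
next
  fix x y z assume "x \<in> carrier (SL2 p)" "y \<in> carrier (SL2 p)" "z \<in> carrier (SL2 p)"
  show "x \<otimes>\<^bsub>SL2 p\<^esub> y \<otimes>\<^bsub>SL2 p\<^esub> z = x \<otimes>\<^bsub>SL2 p\<^esub> (y \<otimes>\<^bsub>SL2 p\<^esub> z)"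
    by (simp add: SL2_def mult_eq mm_assoc)
next
  fix x assume x: "x \<in> carrier (SL2 p)"
  then have "md p x = x" using SL2_iff[OF p] by (simp add: SL2_def)
  then show "\<one>\<^bsub>SL2 p\<^esub> \<otimes>\<^bsub>SL2 p\<^esub> x = x"
    using mm_I2_left[of x] by (simp add: SL2_def mult_eq I2_def)
next
  fix x assume x: "x \<in> carrier (SL2 p)"
  then have mx: "md p x = x" and dx: "int p dvd det2 x - 1" using SL2_iff[OF p] by (auto simp: SL2_def)
  have "md p (adj x) \<in> carrier (SL2 p)"
    using dv_mul1[OF det2_md[of p "adj x"], of 1 "det2 x"] dx SL2_iff[OF p] by (simp add: SL2_def)
  moreover have "md p (mm (md p (adj x)) x) = (1,0,0,1)"
    using dx p by (simp add: adj_mm mod_eq_dvd_iff[symmetric])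
  ultimately show "\<exists>y\<in>carrier (SL2 p). y \<otimes>\<^bsub>SL2 p\<^esub> x = \<one>\<^bsub>SL2 p\<^esub>"
    unfolding SL2_def mult_eq by (intro bexI[of _ "md p (adj x)"]) auto
qed


lemma mod_m1: "p > 1 \<Longrightarrow> (-1::int) mod int p = int p - 1"
proof -
  assume p: "p > 1"
  have "(-1::int) mod int p = (int p - 1) mod int p" by (simp add: mod_eq_dvd_iff)
  also have "\<dots> = int p - 1" using p by (intro mod_pos_pos_trivial) auto
  finally show ?thesis .
qed

lemma SL2_mult[simp]: "x \<otimes>\<^bsub>SL2 p\<^esub> y = md p (mm x y)"
  by (simp add: SL2_def mult_eq)
lemma SL2_carrier[simp]: "carrier (SL2 p) = SL2_carrier p" by (simp add: SL2_def)
lemma SL2_one[simp]: "\<one>\<^bsub>SL2 p\<^esub> = I2" by (simp add: SL2_def I2_def)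

context fixes p :: nat assumes p1: "1 < p" begin

lemma md_I2: "md p I2 = I2" using p1 by (simp add: I2_def)

lemma center_eq: "SL2_center p = pii p I2"
  using p1 mod_m1[OF p1] by (simp add: SL2_center_def pii_def I2_def)

lemma I2_in: "I2 \<in> SL2_carrier p" using p1 SL2_iff[OF p1] md_I2 by (simp add: I2_def)
lemma J_in: "md p (ng I2) \<in> SL2_carrier p"
  using SL2_iff[OF p1] dv_mul1[OF det2_md[of p "ng I2"], of 1 1] by (simp add: I2_def)

lemma rcos: "A \<in> SL2_carrier p \<Longrightarrow> SL2_center p #>\<^bsub>SL2 p\<^esub> A = pii p A"
  using SL2_iff[OF p1, of A] unfolding r_coset_def center_eq pii_def by auto

lemma lcos: "A \<in> SL2_carrier p \<Longrightarrow> A <#\<^bsub>SL2 p\<^esub> SL2_center p = pii p A"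
  using SL2_iff[OF p1, of A] unfolding l_coset_def center_eq pii_def by auto

lemma center_sub: "subgroup (SL2_center p) (SL2 p)"
proof -
  interpret G: group "SL2 p" by (rule SL2_group[OF p1])
  have invJ: "inv\<^bsub>SL2 p\<^esub> (md p (ng I2)) = md p (ng I2)"
    by (rule G.inv_equality) (use J_in md_I2 in auto)
  show ?thesis
  proof (rule G.subgroupI)
    show "SL2_center p \<subseteq> carrier (SL2 p)" using I2_in J_in center_eq md_I2 by (auto simp: pii_def)
    show "SL2_center p \<noteq> {}" by (simp add: center_eq pii_def)
    fix a assume "a \<in> SL2_center p"
    then show "inv\<^bsub>SL2 p\<^esub> a \<in> SL2_center p"
      using invJ md_I2 G.inv_one by (auto simp: center_eq pii_def)
  next
    fix a b assume "a \<in> SL2_center p" "b \<in> SL2_center p"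
    then show "a \<otimes>\<^bsub>SL2 p\<^esub> b \<in> SL2_center p"
      by (auto simp: center_eq pii_def)
  qed
qed

lemma center_normal: "SL2_center p \<lhd> SL2 p"
  unfolding normal_def normal_axioms_def
  using center_sub SL2_group[OF p1] rcos lcos by auto

lemma PSL_group: "group (PSL2 p)"
  unfolding PSL2_def by (rule normal.factorgroup_is_group[OF center_normal])

lemma PSL_carrier: "carrier (PSL2 p) = pii p ` SL2_carrier p"
  unfolding PSL2_def FactGroup_def RCOSETS_def using rcos by auto

lemma PSL_mult: "pii p A \<otimes>\<^bsub>PSL2 p\<^esub> pii p B = pii p (mm A B)"
  unfolding PSL2_def FactGroup_def set_mult_def pii_def by auto

lemma PSL_one: "\<one>\<^bsub>PSL2 p\<^esub> = pii p I2"
  unfolding PSL2_def FactGroup_def using center_eq by simp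

lemma pii_md: "pii p (md p A) = pii p A"
  unfolding pii_def by simp

lemma pii_in: "int p dvd det2 A - 1 \<Longrightarrow> pii p A \<in> carrier (PSL2 p)"
proof -
  assume d: "int p dvd det2 A - 1"
  have "md p A \<in> SL2_carrier p"
    using SL2_iff[OF p1] dv_mul1[OF det2_md[of p A], of 1 "det2 A"] d by simp
  then show ?thesis unfolding PSL_carrier using pii_md by (metis image_eqI)
qed

lemma PSL_lift: "x \<in> carrier (PSL2 p) \<Longrightarrow> \<exists>A. x = pii p A \<and> int p dvd det2 A - 1"
proof -
  assume "x \<in> carrier (PSL2 p)"
  then obtain A where "A \<in> SL2_carrier p" "x = pii p A" unfolding PSL_carrier by auto
  then show ?thesis using SL2_iff[OF p1, of A] by blast
qed

lemma pii_I2_eq: "int p dvd d - 1 \<Longrightarrow> pii p (d, 0, 0, d) = pii p I2"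
proof -
  assume "int p dvd d - 1"
  then have "md p (d,0,0,d) = md p I2" by (simp add: I2_def mod_eq_dvd_iff)
  then show ?thesis by (metis pii_md)
qed

lemma PSL_inv: "int p dvd det2 A - 1 \<Longrightarrow> inv\<^bsub>PSL2 p\<^esub> (pii p A) = pii p (adj A)"
proof -
  assume d: "int p dvd det2 A - 1"
  interpret G: group "PSL2 p" by (rule PSL_group)
  show ?thesis
    by (rule G.inv_equality) (use d pii_in[of A] pii_in[of "adj A"] in \<open>auto simp: PSL_mult adj_mm PSL_one pii_I2_eq\<close>)
qed

lemma pii_eq: "pii p A = pii p B \<longleftrightarrow> md p A = md p B \<or> md p A = md p (ng B)"
proof
  assume e: "pii p A = pii p B"
  have "md p A \<in> pii p A" by (simp add: pii_def)
  then have "md p A \<in> pii p B" using e by simp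
  then show "md p A = md p B \<or> md p A = md p (ng B)" by (simp add: pii_def)
next
  assume h: "md p A = md p B \<or> md p A = md p (ng B)"
  then show "pii p A = pii p B"
  proof
    assume "md p A = md p B"
    then have "md p (ng A) = md p (ng B)" by (metis md_ng)
    then show ?thesis using \<open>md p A = md p B\<close> by (simp add: pii_def)
  next
    assume "md p A = md p (ng B)"
    then have "md p (ng A) = md p B" by (metis md_ng ng_ng)
    then show ?thesis using \<open>md p A = md p (ng B)\<close> by (auto simp: pii_def)
  qed
qed

lemma PSL_one_iff: "pii p A = \<one>\<^bsub>PSL2 p\<^esub> \<longleftrightarrow> md p A = md p I2 \<or> md p A = md p (ng I2)"
  by (simp add: PSL_one pii_eq)

end

definition TU :: "('a,'b) monoid_scheme \<Rightarrow> 'a \<Rightarrow> bool" where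
 "TU G x \<longleftrightarrow> x \<in> carrier G \<and> x \<noteq> \<one>\<^bsub>G\<^esub> \<and> x \<otimes>\<^bsub>G\<^esub> x \<otimes>\<^bsub>G\<^esub> x \<noteq> \<one>\<^bsub>G\<^esub> \<and>
   x \<otimes>\<^bsub>G\<^esub> x \<otimes>\<^bsub>G\<^esub> x \<otimes>\<^bsub>G\<^esub> x \<otimes>\<^bsub>G\<^esub> x \<noteq> \<one>\<^bsub>G\<^esub> \<and>
   (\<exists>c\<in>carrier G. c \<otimes>\<^bsub>G\<^esub> x \<otimes>\<^bsub>G\<^esub> inv\<^bsub>G\<^esub> c = x \<otimes>\<^bsub>G\<^esub> x \<otimes>\<^bsub>G\<^esub> x \<otimes>\<^bsub>G\<^esub> x)"

definition PP :: "('a,'b) monoid_scheme \<Rightarrow> 'a \<Rightarrow> bool" where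
 "PP G g \<longleftrightarrow> (\<exists>u w. TU G u \<and> TU G w \<and>
    (u \<otimes>\<^bsub>G\<^esub> inv\<^bsub>G\<^esub> w) \<otimes>\<^bsub>G\<^esub> (u \<otimes>\<^bsub>G\<^esub> inv\<^bsub>G\<^esub> w) = \<one>\<^bsub>G\<^esub> \<and>
    u \<otimes>\<^bsub>G\<^esub> inv\<^bsub>G\<^esub> w \<noteq> \<one>\<^bsub>G\<^esub> \<and> g = u \<otimes>\<^bsub>G\<^esub> w)"

lemma iso_PP:
  fixes G (structure)
  assumes G: "group G" and a: "\<alpha> \<in> iso G G" and P: "PP G g"
  shows "PP G (\<alpha> g)"
proof -
  interpret group G by (rule G)
  interpret h: group_hom G G \<alpha>
    using a G unfolding group_hom_def group_hom_axioms_def iso_def by auto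
  have inj: "inj_on \<alpha> (carrier G)" using a unfolding iso_def bij_betw_def by auto
  have ne1: "\<alpha> y \<noteq> \<one>" if "y \<in> carrier G" "y \<noteq> \<one>" for y
    using inj_onD[OF inj, of y \<one>] that h.hom_one by auto
  have TU: "TU G (\<alpha> x)" if "TU G x" for x
  proof -
    from that have x: "x \<in> carrier G" and x1: "x \<noteq> \<one>" and x3: "x \<otimes> x \<otimes> x \<noteq> \<one>"
      and x5: "x \<otimes> x \<otimes> x \<otimes> x \<otimes> x \<noteq> \<one>"
      and c: "\<exists>c\<in>carrier G. c \<otimes> x \<otimes> inv c = x \<otimes> x \<otimes> x \<otimes> x"
      unfolding TU_def by auto
    from c obtain c where c: "c \<in> carrier G" "c \<otimes> x \<otimes> inv c = x \<otimes> x \<otimes> x \<otimes> x" by auto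
    have "\<alpha> (x \<otimes> x \<otimes> x) \<noteq> \<one>" by (rule ne1) (use x x3 in auto)
    moreover have "\<alpha> (x \<otimes> x \<otimes> x \<otimes> x \<otimes> x) \<noteq> \<one>" by (rule ne1) (use x x5 in auto)
    moreover have "\<alpha> x \<noteq> \<one>" by (rule ne1) (use x x1 in auto)
    moreover have "\<alpha> c \<otimes> \<alpha> x \<otimes> inv (\<alpha> c) = \<alpha> x \<otimes> \<alpha> x \<otimes> \<alpha> x \<otimes> \<alpha> x"
    proof -
      have "\<alpha> (c \<otimes> x \<otimes> inv c) = \<alpha> (x \<otimes> x \<otimes> x \<otimes> x)" by (rule arg_cong[OF c(2)])
      moreover have "\<alpha> (c \<otimes> x \<otimes> inv c) = \<alpha> c \<otimes> \<alpha> x \<otimes> inv (\<alpha> c)" using c(1) x by simp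
      moreover have "\<alpha> (x \<otimes> x \<otimes> x \<otimes> x) = \<alpha> x \<otimes> \<alpha> x \<otimes> \<alpha> x \<otimes> \<alpha> x" using x by simp
      ultimately show ?thesis by simp
    qed
    ultimately show ?thesis using x c unfolding TU_def by (intro conjI bexI[of _ "\<alpha> c"]) auto
  qed
  from P obtain u w where u: "TU G u" and w: "TU G w" and
    z: "(u \<otimes> inv w) \<otimes> (u \<otimes> inv w) = \<one>" "u \<otimes> inv w \<noteq> \<one>" and g: "g = u \<otimes> w"
    unfolding PP_def by auto
  have uc: "u \<in> carrier G" and wc: "w \<in> carrier G" using u w unfolding TU_def by auto
  have "\<alpha> ((u \<otimes> inv w) \<otimes> (u \<otimes> inv w)) = \<one>" using z by simp
  moreover have "\<alpha> (u \<otimes> inv w) \<noteq> \<one>" by (rule ne1) (use z uc wc in auto)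
  ultimately show ?thesis unfolding PP_def using TU[OF u] TU[OF w] g uc wc
    by (intro exI[of _ "\<alpha> u"] exI[of _ "\<alpha> w"]) auto
qed

lemma gb_scal1: "(n::int) dvd a * d - b * c - 1 \<Longrightarrow> n dvd b \<Longrightarrow> n dvd c \<Longrightarrow> n dvd a - d \<Longrightarrow> n dvd (a - 1) * (a + 1)"
  unfolding dvd_def by Groebner_Basis.algebra


lemma gb_inv2a: "(n::int) dvd (a * a+b * c) - e \<Longrightarrow> n dvd (c * b+d * d) - e \<Longrightarrow> n dvd (a+d) * (a-d)"
  unfolding dvd_def by Groebner_Basis.algebra
lemma gb_inv2b: "(n::int) dvd (a * b+b * d) - e \<Longrightarrow> e = 0 \<Longrightarrow> n dvd (a+d) * b"
  by (simp add: algebra_simps)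
lemma gb_inv2c: "(n::int) dvd (c * a+d * c) - e \<Longrightarrow> e = 0 \<Longrightarrow> n dvd (a+d) * c"
  by (simp add: algebra_simps)

lemma X3_id: "mm (mm (a,b,c,d) (a,b,c,d)) (a,b,c,d) =
  (((a+d)^2-(a * d-b * c)) * a - (a+d) * (a * d-b * c), ((a+d)^2-(a * d-b * c)) * b, ((a+d)^2-(a * d-b * c)) * c,
   ((a+d)^2-(a * d-b * c)) * d - (a+d) * (a * d-b * c))"
  apply (simp only: mm_simp prod.inject)
  apply (intro conjI)
  apply Groebner_Basis.algebra+
  done

lemma X4_tr: "tr (mm (mm (mm (a,b,c,d) (a,b,c,d)) (a,b,c,d)) (a,b,c,d)) =
   (a+d)^4 - 4 * (a+d)^2 * (a * d-b * c) + 2 * (a * d-b * c)^2"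
  by (simp only: mm_simp tr_simp) Groebner_Basis.algebra

lemma X5_id: "mm (mm (mm (mm (a,b,c,d) (a,b,c,d)) (a,b,c,d)) (a,b,c,d)) (a,b,c,d) =
  (((a+d)^4 - 3 * (a+d)^2 * (a * d-b * c) + (a * d-b * c)^2) * a - (a * d-b * c) * ((a+d)^3 - 2 * (a+d) * (a * d-b * c)),
   ((a+d)^4 - 3 * (a+d)^2 * (a * d-b * c) + (a * d-b * c)^2) * b,
   ((a+d)^4 - 3 * (a+d)^2 * (a * d-b * c) + (a * d-b * c)^2) * c,
   ((a+d)^4 - 3 * (a+d)^2 * (a * d-b * c) + (a * d-b * c)^2) * d - (a * d-b * c) * ((a+d)^3 - 2 * (a+d) * (a * d-b * c)))"
  apply (simp only: mm_simp prod.inject)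
  apply (intro conjI)
  apply Groebner_Basis.algebra+
  done

lemma conj_tr: "tr (mm (mm C Q) (adj C)) = det2 C * tr Q"
  by (cases C; cases Q) (simp add: algebra_simps)

lemma gb_tu1: "(n::int) dvd D - 1 \<Longrightarrow> n dvd e - 1 \<Longrightarrow> n dvd e * t - (t^4 - 4 * t^2 * D + 2 * D^2) \<Longrightarrow>
   n dvd (t-2) * ((t+1) * (t^2+t-1))"
  unfolding dvd_def by Groebner_Basis.algebra
lemma gb_tu2: "(n::int) dvd D - 1 \<Longrightarrow> n dvd e - 1 \<Longrightarrow> n dvd e * t + (t^4 - 4 * t^2 * D + 2 * D^2) \<Longrightarrow>
   n dvd (t+2) * ((t-1) * (t^2-t-1))"
  unfolding dvd_def by Groebner_Basis.algebra
lemma gb_x3a: "(n::int) dvd D - 1 \<Longrightarrow> n dvd t + 1 \<Longrightarrow> n dvd ((t^2-D) * y - t * D) - 1"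
  unfolding dvd_def by Groebner_Basis.algebra
lemma gb_x3b: "(n::int) dvd D - 1 \<Longrightarrow> n dvd t - 1 \<Longrightarrow> n dvd ((t^2-D) * y - t * D) - -1"
  unfolding dvd_def by Groebner_Basis.algebra
lemma gb_x3c: "(n::int) dvd D - 1 \<Longrightarrow> n dvd t + 1 \<or> n dvd t - 1 \<Longrightarrow> n dvd (t^2-D) * y"
  unfolding dvd_def by (elim disjE) Groebner_Basis.algebra+
lemma gb_x5a: "(n::int) dvd D - 1 \<Longrightarrow> n dvd t^2 + t - 1 \<Longrightarrow>
   n dvd ((t^4 - 3 * t^2 * D + D^2) * y - D * (t^3 - 2 * t * D)) - 1"
  unfolding dvd_def by Groebner_Basis.algebra
lemma gb_x5b: "(n::int) dvd D - 1 \<Longrightarrow> n dvd t^2 - t - 1 \<Longrightarrow>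
   n dvd ((t^4 - 3 * t^2 * D + D^2) * y - D * (t^3 - 2 * t * D)) - -1"
  unfolding dvd_def by Groebner_Basis.algebra
lemma gb_x5c: "(n::int) dvd D - 1 \<Longrightarrow> n dvd t^2 + t - 1 \<or> n dvd t^2 - t - 1 \<Longrightarrow>
   n dvd (t^4 - 3 * t^2 * D + D^2) * y"
  unfolding dvd_def by (elim disjE) Groebner_Basis.algebra+

lemma md_tr1: "md p A = md p B \<Longrightarrow> int p dvd tr A - tr B"
proof -
  assume "md p A = md p B"
  moreover obtain a b c d e f g h where "A = (a,b,c,d)" "B = (e,f,g,h)" by (cases A; cases B) auto
  ultimately have "int p dvd a - e" "int p dvd d - h" by (simp_all add: mod_eq_dvd_iff)
  then have "int p dvd (a - e) + (d - h)" by simp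
  then show ?thesis using \<open>A = _\<close> \<open>B = _\<close> by (simp add: algebra_simps)
qed
lemma md_tr2: "md p A = md p (ng B) \<Longrightarrow> int p dvd tr A + tr B"
proof -
  assume "md p A = md p (ng B)"
  then have "int p dvd tr A - tr (ng B)" by (rule md_tr1)
  moreover have "tr (ng B) = - tr B" by (cases B) simp
  ultimately show ?thesis by simp
qed

context fixes p :: nat assumes pr: "Factorial_Ring.prime p" begin

lemma p1: "1 < p" using pr prime_gt_1_nat by blast
lemma prI: "Factorial_Ring.prime (int p)" using pr by simp

lemma scal:
  assumes d: "int p dvd a * d - b * c - 1" and n1: "md p (a,b,c,d) \<noteq> md p I2"
    and n2: "md p (a,b,c,d) \<noteq> md p (ng I2)"
    and h: "int p dvd al * b" "int p dvd al * c" "int p dvd al * (a - d)"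
  shows "int p dvd al"
proof (rule ccontr)
  assume na: "\<not> int p dvd al"
  then have hb: "int p dvd b" "int p dvd c" "int p dvd a - d"
    using h prime_dvd_mult_iff[OF prI] by blast+
  have "int p dvd (a - 1) * (a + 1)" using gb_scal1[OF d hb] .
  then have "int p dvd a - 1 \<or> int p dvd a + 1" using prime_dvd_mult_iff[OF prI] by blast
  then show False
  proof
    assume "int p dvd a - 1"
    moreover have "int p dvd d - 1"
    proof -
      have "d - 1 = (a - 1) - (a - d)" by simp
      then show ?thesis using \<open>int p dvd a - 1\<close> \<open>int p dvd a - d\<close> by (metis dvd_diff)
    qed
    ultimately have "md p (a,b,c,d) = md p I2" using hb by (simp add: I2_def mod_eq_dvd_iff)
    then show False using n1 by simp
  next
    assume "int p dvd a + 1"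
    moreover have "int p dvd d + 1"
    proof -
      have "d + 1 = (a + 1) - (a - d)" by simp
      then show ?thesis using \<open>int p dvd a + 1\<close> \<open>int p dvd a - d\<close> by (metis dvd_diff)
    qed
    ultimately have "md p (a,b,c,d) = md p (ng I2)" using hb by (simp add: I2_def mod_eq_dvd_iff)
    then show False using n2 by simp
  qed
qed


lemma inv2_trace:
  assumes d: "int p dvd a * d - b * c - 1" and n1: "md p (a,b,c,d) \<noteq> md p I2"
    and n2: "md p (a,b,c,d) \<noteq> md p (ng I2)"
    and sq: "md p (mm (a,b,c,d) (a,b,c,d)) = md p I2 \<or> md p (mm (a,b,c,d) (a,b,c,d)) = md p (ng I2)"
  shows "int p dvd a + d"
proof -
  have "\<exists>e. int p dvd (a * a+b * c) - e \<and> int p dvd (a * b+b * d) - 0 \<and>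
     int p dvd (c * a+d * c) - 0 \<and> int p dvd (c * b+d * d) - e"
  proof (cases "md p (mm (a,b,c,d) (a,b,c,d)) = md p I2")
    case True then show ?thesis by (intro exI[of _ 1]) (auto simp: I2_def mod_eq_dvd_iff)
  next
    case False then have "md p (mm (a,b,c,d) (a,b,c,d)) = md p (ng I2)" using sq by auto
    then show ?thesis by (intro exI[of _ "-1"]) (auto simp: I2_def mod_eq_dvd_iff)
  qed
  then obtain e where e: "int p dvd (a * a+b * c) - e" "int p dvd (a * b+b * d) - 0"
     "int p dvd (c * a+d * c) - 0" "int p dvd (c * b+d * d) - e" by blast
  show ?thesis
    by (rule scal[OF d n1 n2 gb_inv2b[OF e(2)] gb_inv2c[OF e(3)] gb_inv2a[OF e(1) e(4)]]) simp_all
qed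

lemma TU_tr:
  assumes tu: "TU (PSL2 p) (pii p Q)" and dX: "int p dvd det2 Q - 1"
  shows "int p dvd tr Q - 2 \<or> int p dvd tr Q + 2"
proof -
  note p1 = p1
  obtain a b c d where Q: "Q = (a,b,c,d)" by (cases Q) auto
  define t where "t = a + d"
  define D where "D = a * d - b * c"
  have D1: "int p dvd D - 1" using dX Q D_def by simp
  have nI: "md p Q \<noteq> md p I2 \<and> md p Q \<noteq> md p (ng I2)"
    using tu PSL_one_iff[OF p1] unfolding TU_def by auto
  have n3: "md p (mm (mm Q Q) Q) \<noteq> md p I2 \<and> md p (mm (mm Q Q) Q) \<noteq> md p (ng I2)"
    using tu PSL_one_iff[OF p1] unfolding TU_def by (auto simp: PSL_mult[OF p1])
  have n5: "md p (mm (mm (mm (mm Q Q) Q) Q) Q) \<noteq> md p I2 \<and> md p (mm (mm (mm (mm Q Q) Q) Q) Q) \<noteq> md p (ng I2)"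
    using tu PSL_one_iff[OF p1] unfolding TU_def by (auto simp: PSL_mult[OF p1])
  from tu obtain cc where cc: "cc \<in> carrier (PSL2 p)"
    "cc \<otimes>\<^bsub>PSL2 p\<^esub> pii p Q \<otimes>\<^bsub>PSL2 p\<^esub> inv\<^bsub>PSL2 p\<^esub> cc =
     pii p Q \<otimes>\<^bsub>PSL2 p\<^esub> pii p Q \<otimes>\<^bsub>PSL2 p\<^esub> pii p Q \<otimes>\<^bsub>PSL2 p\<^esub> pii p Q"
    unfolding TU_def by auto
  from PSL_lift[OF p1 cc(1)] obtain C where C: "cc = pii p C" "int p dvd det2 C - 1" by auto
  have "pii p (mm (mm C Q) (adj C)) = pii p (mm (mm (mm Q Q) Q) Q)"
    using cc(2) C by (simp add: PSL_inv[OF p1] PSL_mult[OF p1])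
  then have "md p (mm (mm C Q) (adj C)) = md p (mm (mm (mm Q Q) Q) Q) \<or>
             md p (mm (mm C Q) (adj C)) = md p (ng (mm (mm (mm Q Q) Q) Q))"
    using pii_eq[OF p1] by blast
  then have "int p dvd det2 C * t - (t^4 - 4 * t^2 * D + 2 * D^2) \<or> int p dvd det2 C * t + (t^4 - 4 * t^2 * D + 2 * D^2)"
    using md_tr1 md_tr2 conj_tr X4_tr Q t_def D_def by (metis tr_simp)
  then have "int p dvd (t-2) * ((t+1) * (t^2+t-1)) \<or> int p dvd (t+2) * ((t-1) * (t^2-t-1))"
    using gb_tu1[OF D1 C(2)] gb_tu2[OF D1 C(2)] by blast
  then have cases: "int p dvd t - 2 \<or> int p dvd t + 2 \<or> int p dvd t + 1 \<or> int p dvd t - 1 \<or>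
     int p dvd t^2 + t - 1 \<or> int p dvd t^2 - t - 1"
    using prime_dvd_mult_iff[OF prI] by blast
  have X3e: "mm (mm Q Q) Q = ((t^2-D) * a - t * D, (t^2-D) * b, (t^2-D) * c, (t^2-D) * d - t * D)"
    unfolding Q t_def D_def by (rule X3_id)
  have X5e: "mm (mm (mm (mm Q Q) Q) Q) Q = ((t^4 - 3 * t^2 * D + D^2) * a - D * (t^3 - 2 * t * D),
     (t^4 - 3 * t^2 * D + D^2) * b, (t^4 - 3 * t^2 * D + D^2) * c, (t^4 - 3 * t^2 * D + D^2) * d - D * (t^3 - 2 * t * D))"
    unfolding Q t_def D_def by (rule X5_id)
  have "\<not> int p dvd t + 1"
  proof
    assume h: "int p dvd t + 1"
    have "md p (mm (mm Q Q) Q) = md p I2"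
      unfolding X3e I2_def md_eq_iff using gb_x3a[OF D1 h] gb_x3c[OF D1] h by simp
    then show False using n3 by simp
  qed
  moreover have "\<not> int p dvd t - 1"
  proof
    assume h: "int p dvd t - 1"
    have "md p (mm (mm Q Q) Q) = md p (ng I2)"
      unfolding X3e I2_def ng_simp md_eq_iff using gb_x3b[OF D1 h] gb_x3c[OF D1] h by simp
    then show False using n3 by simp
  qed
  moreover have "\<not> int p dvd t^2 + t - 1"
  proof
    assume h: "int p dvd t^2 + t - 1"
    have "md p (mm (mm (mm (mm Q Q) Q) Q) Q) = md p I2"
      unfolding X5e I2_def md_eq_iff using gb_x5a[OF D1 h] gb_x5c[OF D1] h by simp
    then show False using n5 by simp
  qed
  moreover have "\<not> int p dvd t^2 - t - 1"
  proof
    assume h: "int p dvd t^2 - t - 1"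
    have "md p (mm (mm (mm (mm Q Q) Q) Q) Q) = md p (ng I2)"
      unfolding X5e I2_def ng_simp md_eq_iff using gb_x5b[OF D1 h] gb_x5c[OF D1] h by simp
    then show False using n5 by simp
  qed
  ultimately show ?thesis using cases Q t_def by auto
qed

end

lemma tr_UW: "tr (mm U W) = tr U * tr W - tr (mm U (adj W))"
  by (cases U; cases W) (simp add: algebra_simps)

lemma gb_pp: "(n::int) dvd tu^2 - 2^2 \<Longrightarrow> n dvd tw^2 - 2^2 \<Longrightarrow> n dvd s \<Longrightarrow>
   n dvd th^2 - (tu * tw - s)^2 \<Longrightarrow> n dvd (th - 4) * (th + 4)"
  unfolding dvd_def by Groebner_Basis.algebra

lemma sq_dvd: "(n::int) dvd x - c \<or> n dvd x + c \<Longrightarrow> n dvd x^2 - c^2"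
proof -
  assume h: "n dvd x - c \<or> n dvd x + c"
  have e: "x^2 - c^2 = (x - c) * (x + c)" by (simp add: algebra_simps power2_eq_square)
  from h show ?thesis unfolding e by (metis dvd_mult dvd_mult2)
qed

fun mpw :: "mat2 \<Rightarrow> nat \<Rightarrow> mat2" where
  "mpw A 0 = I2"
| "mpw A (Suc m) = mm (mpw A m) A"

lemma mpw_comm: "mm A (mpw A m) = mm (mpw A m) A"
  by (induction m) (simp_all add: mm_assoc[symmetric])

lemma mpw_det: "det2 (mpw A m) = det2 A ^ m"
  by (induction m) (simp_all add: det2_mm I2_def)

definition G0 :: mat2 where "G0 = (3,1,2,1)"

lemma gb_c1: "(n::int) dvd h1 - h2 - 2 \<or> n dvd h1 - h2 + 2 \<Longrightarrow> h1 * (h1 - 2 * h2) - h2 * (2 * h2) = 1 \<Longrightarrow>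
   n dvd 3 * ((h2 - 1) * (h2 + 1))"
  unfolding dvd_def by (elim disjE) Groebner_Basis.algebra+

lemma lin1: "(n::int) dvd x - y - 2 \<Longrightarrow> n dvd y - 1 \<Longrightarrow> n dvd x - 3" unfolding dvd_def by Groebner_Basis.algebra
lemma lin2: "(n::int) dvd y - 1 \<Longrightarrow> n dvd 2 * y - 2" unfolding dvd_def by Groebner_Basis.algebra
lemma lin3: "(n::int) dvd x - y - 2 \<Longrightarrow> n dvd y - 1 \<Longrightarrow> n dvd x - 2 * y - 1" unfolding dvd_def by Groebner_Basis.algebra
lemma lin4: "(n::int) dvd x - y - 2 \<Longrightarrow> n dvd y + 1 \<Longrightarrow> n dvd x - 1" unfolding dvd_def by Groebner_Basis.algebra
lemma lin5: "(n::int) dvd y + 1 \<Longrightarrow> n dvd 2 * y - -2" unfolding dvd_def by Groebner_Basis.algebra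
lemma lin6: "(n::int) dvd x - y - 2 \<Longrightarrow> n dvd y + 1 \<Longrightarrow> n dvd x - 2 * y - 3" unfolding dvd_def by Groebner_Basis.algebra
lemma lin7: "(n::int) dvd x - y + 2 \<Longrightarrow> n dvd y - 1 \<Longrightarrow> n dvd x - -1" unfolding dvd_def by Groebner_Basis.algebra
lemma lin8: "(n::int) dvd x - y + 2 \<Longrightarrow> n dvd y - 1 \<Longrightarrow> n dvd x - 2 * y - -3" unfolding dvd_def by Groebner_Basis.algebra
lemma lin9: "(n::int) dvd x - y + 2 \<Longrightarrow> n dvd y + 1 \<Longrightarrow> n dvd x - -3" unfolding dvd_def by Groebner_Basis.algebra
lemma lin10: "(n::int) dvd x - y + 2 \<Longrightarrow> n dvd y + 1 \<Longrightarrow> n dvd x - 2 * y - -1" unfolding dvd_def by Groebner_Basis.algebra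
lemma lin11: "(n::int) dvd y + 1 \<Longrightarrow> n dvd y - -1" by simp
lemma lin12: "(n::int) dvd y - 1 \<Longrightarrow> n dvd 2 * y - 2" unfolding dvd_def by Groebner_Basis.algebra

lemma two_half: "(n::int) dvd 2 * x \<Longrightarrow> \<not> n dvd 2 \<Longrightarrow> Factorial_Ring.prime n \<Longrightarrow> n dvd x"
  using prime_dvd_mult_iff by blast

context fixes p :: nat assumes pr: "Factorial_Ring.prime p" and p17: "17 \<le> p" begin

lemma pp1: "1 < p" using p1[OF pr] .
lemma ppI: "Factorial_Ring.prime (int p)" using prI[OF pr] .

lemma nd_small: "0 < m \<Longrightarrow> m < 17 \<Longrightarrow> \<not> int p dvd m"
  using p17 zdvd_imp_le by fastforce

lemma PP_tr:
  assumes pp: "PP (PSL2 p) (pii p H)" and dH: "int p dvd det2 H - 1"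
  shows "int p dvd tr H - 4 \<or> int p dvd tr H + 4"
proof -
  note p1 = pp1
  from pp obtain u w where u: "TU (PSL2 p) u" and w: "TU (PSL2 p) w"
    and z1: "(u \<otimes>\<^bsub>PSL2 p\<^esub> inv\<^bsub>PSL2 p\<^esub> w) \<otimes>\<^bsub>PSL2 p\<^esub> (u \<otimes>\<^bsub>PSL2 p\<^esub> inv\<^bsub>PSL2 p\<^esub> w) = \<one>\<^bsub>PSL2 p\<^esub>"
    and z2: "u \<otimes>\<^bsub>PSL2 p\<^esub> inv\<^bsub>PSL2 p\<^esub> w \<noteq> \<one>\<^bsub>PSL2 p\<^esub>"
    and g: "pii p H = u \<otimes>\<^bsub>PSL2 p\<^esub> w"
    unfolding PP_def by blast
  have uc: "u \<in> carrier (PSL2 p)" using u unfolding TU_def by blast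
  have wc: "w \<in> carrier (PSL2 p)" using w unfolding TU_def by blast
  obtain U where U: "u = pii p U" "int p dvd det2 U - 1" using PSL_lift[OF p1 uc] by blast
  obtain W where W: "w = pii p W" "int p dvd det2 W - 1" using PSL_lift[OF p1 wc] by blast
  have tU: "int p dvd tr U - 2 \<or> int p dvd tr U + 2" using TU_tr[OF pr] u U by simp
  have tW: "int p dvd tr W - 2 \<or> int p dvd tr W + 2" using TU_tr[OF pr] w W by simp
  define Z where "Z = mm U (adj W)"
  have dZ: "int p dvd det2 Z - 1"
    using dv_mul1[of "int p" "det2 Z" "det2 Z" "det2 U" "det2 W"] U W by (simp add: Z_def det2_mm)
  have zz: "u \<otimes>\<^bsub>PSL2 p\<^esub> inv\<^bsub>PSL2 p\<^esub> w = pii p Z"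
    using U W by (simp add: PSL_inv[OF p1] PSL_mult[OF p1] Z_def)
  obtain a b c d where Zd: "Z = (a,b,c,d)" by (cases Z) auto
  have "int p dvd a + d"
  proof (rule inv2_trace[OF pr])
    show "int p dvd a * d - b * c - 1" using dZ Zd by simp
    show "md p (a,b,c,d) \<noteq> md p I2" "md p (a,b,c,d) \<noteq> md p (ng I2)"
      using z2 zz Zd PSL_one_iff[OF p1] by auto
    show "md p (mm (a,b,c,d) (a,b,c,d)) = md p I2 \<or> md p (mm (a,b,c,d) (a,b,c,d)) = md p (ng I2)"
      using z1 zz Zd PSL_one_iff[OF p1, of "mm Z Z"] by (simp add: PSL_mult[OF p1])
  qed
  then have tZ: "int p dvd tr Z" using Zd by simp
  have "pii p H = pii p (mm U W)" using g U W by (simp add: PSL_mult[OF p1])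
  then have "md p H = md p (mm U W) \<or> md p H = md p (ng (mm U W))" using pii_eq[OF p1] by blast
  then have "int p dvd tr H - tr (mm U W) \<or> int p dvd tr H + tr (mm U W)" using md_tr1 md_tr2 by blast
  then have "int p dvd (tr H)^2 - (tr (mm U W))^2" by (rule sq_dvd)
  then have "int p dvd (tr H - 4) * (tr H + 4)"
    using gb_pp[OF sq_dvd[OF tU] sq_dvd[OF tW] tZ] tr_UW[of U W] Z_def by simp
  then show ?thesis using prime_dvd_mult_iff[OF ppI] by blast
qed

lemma comm_G0:
  assumes cm: "mm G0 H = mm H G0" and dH: "det2 H = 1"
   and t: "int p dvd tr H - 4 \<or> int p dvd tr H + 4"
  shows "pii p H = pii p G0 \<or> pii p H = pii p (adj G0)"
proof -
  note p1 = pp1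
  obtain h1 h2 h3 h4 where H: "H = (h1,h2,h3,h4)" by (cases H) auto
  from cm have "3*h1 + h3 = h1*3 + h2*2" "3*h2 + h4 = h1 + h2" by (simp_all add: H G0_def)
  then have h3: "h3 = 2 * h2" and h4: "h4 = h1 - 2 * h2" by linarith+
  have det: "h1 * (h1 - 2 * h2) - h2 * (2 * h2) = 1" using dH H h3 h4 by simp
  have n2: "\<not> int p dvd 2" and n3: "\<not> int p dvd 3" using nd_small by auto
  have "int p dvd 2 * (h1 - h2 - 2) \<or> int p dvd 2 * (h1 - h2 + 2)"
  proof -
    have "tr H - 4 = 2 * (h1 - h2 - 2)" "tr H + 4 = 2 * (h1 - h2 + 2)" using H h4 by simp_all
    then show ?thesis using t by simp
  qed
  then have c1: "int p dvd h1 - h2 - 2 \<or> int p dvd h1 - h2 + 2" using two_half[OF _ n2 ppI] by blast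
  have "int p dvd 3 * ((h2 - 1) * (h2 + 1))" by (rule gb_c1[OF c1 det])
  then have c2: "int p dvd h2 - 1 \<or> int p dvd h2 + 1" using n3 prime_dvd_mult_iff[OF ppI] by blast
  have adjG: "adj G0 = (1, -1, -2, 3)" by (simp add: G0_def)
  have pngadj: "pii p (-1, 1, 2, -3) = pii p (adj G0)"
    unfolding adjG pii_eq[OF p1] by simp
  have pngG: "pii p (-3, -1, -2, -1) = pii p G0"
    unfolding G0_def pii_eq[OF p1] by simp
  from c1 show ?thesis
  proof
    assume a: "int p dvd h1 - h2 - 2"
    from c2 show ?thesis
    proof
      assume b: "int p dvd h2 - 1"
      have "md p H = md p G0" unfolding H h3 h4 G0_def md_eq_iff
        using lin1[OF a b] b lin2[OF b] lin3[OF a b] by simp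
      then show ?thesis using pii_eq[OF p1] by blast
    next
      assume b: "int p dvd h2 + 1"
      have "md p H = md p (adj G0)" unfolding H h3 h4 adjG md_eq_iff
        using lin4[OF a b] lin11[OF b] lin5[OF b] lin6[OF a b] by simp
      then show ?thesis using pii_eq[OF p1] by blast
    qed
  next
    assume a: "int p dvd h1 - h2 + 2"
    from c2 show ?thesis
    proof
      assume b: "int p dvd h2 - 1"
      have "md p H = md p (-1, 1, 2, -3)" unfolding H h3 h4 md_eq_iff
        using lin7[OF a b] b lin12[OF b] lin8[OF a b] by simp
      then have "pii p H = pii p (-1, 1, 2, -3)" using pii_eq[OF p1] by blast
      then show ?thesis using pngadj by simp
    next
      assume b: "int p dvd h2 + 1"
      have "md p H = md p (-3, -1, -2, -1)" unfolding H h3 h4 md_eq_iff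
        using lin9[OF a b] lin11[OF b] lin5[OF b] lin10[OF a b] by simp
      then have "pii p H = pii p (-3, -1, -2, -1)" using pii_eq[OF p1] by blast
      then show ?thesis using pngG by simp
    qed
  qed
qed

end

lemma copr: "(a::nat) * x = b * y + 1 \<Longrightarrow> coprime a b"
proof (rule coprimeI)
  fix c assume h: "a * x = b * y + 1" "c dvd a" "c dvd b"
  then have "c dvd b * y + 1" by (metis dvd_mult2)
  moreover have "c dvd b * y" using h by simp
  ultimately have "c dvd 1" by (metis dvd_add_right_iff)
  then show "is_unit c" by simp
qed

lemma choose_k: "5 \<le> (n::nat) \<Longrightarrow> n \<noteq> 6 \<Longrightarrow> \<exists>k. coprime k n \<and> 2 \<le> k \<and> k + 2 \<le> n"
proof -
  assume n5: "5 \<le> n" and n6: "n \<noteq> 6"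
  have cs: "n mod 4 = 0 \<or> n mod 4 = 2 \<or> odd n" by presburger
  have r1: ?thesis if "odd n"
    using that n5 by (intro exI[of _ 2]) auto
  have r2: ?thesis if "n mod 4 = 0"
  proof -
    define m where "m = n div 4"
    have m: "n = 4 * m" using that unfolding m_def by presburger
    have "(2*m+1) * (2*m+1) = n * (m+1) + 1" unfolding m by (simp add: algebra_simps)
    then have "coprime (2*m+1) n" by (rule copr)
    moreover have "2 \<le> 2*m+1" "2*m+1+2 \<le> n" using m n5 by auto
    ultimately show ?thesis by blast
  qed
  have r3: ?thesis if "n mod 4 = 2"
  proof -
    define m where "m = n div 4"
    have m: "n = 4 * m + 2" using that unfolding m_def by presburger
    have m2: "m \<ge> 2" using m n5 n6 by auto
    have "(2*m+3) * (m+1) = (2*m+1) * (m+2) + 1" by (simp add: algebra_simps)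
    then have c1: "coprime (2*m+3) (2*m+1)" by (rule copr)
    have c2: "coprime (2*m+3) 2" by simp
    have nn: "n = 2 * (2*m+1)" using m by simp
    have "coprime (2*m+3) n" unfolding nn coprime_mult_right_iff using c1 c2 by blast
    moreover have "2 \<le> 2*m+3" "2*m+3+2 \<le> n" using m m2 by auto
    ultimately show ?thesis by blast
  qed
  from cs show ?thesis
  proof (elim disjE)
    assume "n mod 4 = 0" then show ?thesis by (rule r2)
  next
    assume "n mod 4 = 2" then show ?thesis by (rule r3)
  next
    assume "odd n" then show ?thesis by (rule r1)
  qed
qed

lemma pii_pow: "1 < p \<Longrightarrow> pii p A [^]\<^bsub>PSL2 p\<^esub> (m::nat) = pii p (mpw A m)"
  by (induction m) (simp_all add: PSL_one PSL_mult)

lemma SL2_fin: "finite (SL2_carrier p)"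
proof -
  have "SL2_carrier p \<subseteq> {0..<int p} \<times> {0..<int p} \<times> {0..<int p} \<times> {0..<int p}"
    unfolding SL2_carrier_def by auto
  then show ?thesis by (rule finite_subset) auto
qed

lemma md_b: "md p (a,b,c,d) = md p (e,f,g,h) \<Longrightarrow> int p dvd b - f"
  by (simp add: mod_eq_dvd_iff)
lemma md_c: "md p (a,b,c,d) = md p (e,f,g,h) \<Longrightarrow> int p dvd c - g"
  by (simp add: mod_eq_dvd_iff)

context fixes p :: nat assumes pr: "Factorial_Ring.prime p" and p17: "17 \<le> p" begin

lemma ne1b: "0 < b \<Longrightarrow> b < 17 \<Longrightarrow> pii p (a,b,c,d) \<noteq> \<one>\<^bsub>PSL2 p\<^esub>"
proof
  assume b: "0 < b" "b < 17" and e: "pii p (a,b,c,d) = \<one>\<^bsub>PSL2 p\<^esub>"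
  then have "md p (a,b,c,d) = md p (1,0,0,1) \<or> md p (a,b,c,d) = md p (-1,-0,-0,-1)"
    using PSL_one_iff[OF pp1[OF pr p17]] by (simp add: I2_def)
  then have "int p dvd b" using md_b by fastforce
  then show False using nd_small[OF pr p17] b by blast
qed

lemma ne1c: "0 < c \<Longrightarrow> c < 17 \<Longrightarrow> pii p (a,b,c,d) \<noteq> \<one>\<^bsub>PSL2 p\<^esub>"
proof
  assume b: "0 < c" "c < 17" and e: "pii p (a,b,c,d) = \<one>\<^bsub>PSL2 p\<^esub>"
  then have "md p (a,b,c,d) = md p (1,0,0,1) \<or> md p (a,b,c,d) = md p (-1,-0,-0,-1)"
    using PSL_one_iff[OF pp1[OF pr p17]] by (simp add: I2_def)
  then have "int p dvd c" using md_c by fastforce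
  then show False using nd_small[OF pr p17] b by blast
qed

lemma PP_g: "PP (PSL2 p) (pii p G0)"
proof -
  note p1 = pp1[OF pr p17]
  have odd: "odd p" using pr p17 prime_odd_nat by auto
  define q where "q = (int p + 1) div 2"
  have q2: "2 * q = int p + 1" using odd unfolding q_def by (simp add: odd_pos) (metis odd_two_times_div_two_succ of_nat_Suc even_of_nat add.commute)
  have q2': "q * 2 = int p + 1" using q2 by simp
  let ?G = "PSL2 p"
  define u where "u = pii p (1,1,0,1)"
  define w where "w = pii p (1,0,2,1)"
  have uc: "u \<in> carrier ?G" unfolding u_def by (rule pii_in[OF p1]) simp
  have wc: "w \<in> carrier ?G" unfolding w_def by (rule pii_in[OF p1]) simp
  have TUu: "TU ?G u"
    unfolding TU_def
  proof (intro conjI)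
    show "u \<in> carrier ?G" by (rule uc)
    show "u \<noteq> \<one>\<^bsub>?G\<^esub>" unfolding u_def by (rule ne1b) auto
    show "u \<otimes>\<^bsub>?G\<^esub> u \<otimes>\<^bsub>?G\<^esub> u \<noteq> \<one>\<^bsub>?G\<^esub>"
      unfolding u_def PSL_mult[OF p1] by (simp add: ne1b)
    show "u \<otimes>\<^bsub>?G\<^esub> u \<otimes>\<^bsub>?G\<^esub> u \<otimes>\<^bsub>?G\<^esub> u \<otimes>\<^bsub>?G\<^esub> u \<noteq> \<one>\<^bsub>?G\<^esub>"
      unfolding u_def PSL_mult[OF p1] by (simp add: ne1b)
    have cc: "pii p (2,0,0,q) \<in> carrier ?G" by (rule pii_in[OF p1]) (simp add: q2)
    have "pii p (2,0,0,q) \<otimes>\<^bsub>?G\<^esub> u \<otimes>\<^bsub>?G\<^esub> inv\<^bsub>?G\<^esub> (pii p (2,0,0,q)) = pii p (2*q, 4, 0, 2*q)"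
      unfolding u_def by (simp add: PSL_inv[OF p1] PSL_mult[OF p1] q2 q2')
    also have "\<dots> = pii p (1,4,0,1)" unfolding pii_eq[OF p1] by (simp add: q2 q2' mod_eq_dvd_iff)
    also have "\<dots> = u \<otimes>\<^bsub>?G\<^esub> u \<otimes>\<^bsub>?G\<^esub> u \<otimes>\<^bsub>?G\<^esub> u" unfolding u_def by (simp add: PSL_mult[OF p1])
    finally show "\<exists>c\<in>carrier ?G. c \<otimes>\<^bsub>?G\<^esub> u \<otimes>\<^bsub>?G\<^esub> inv\<^bsub>?G\<^esub> c = u \<otimes>\<^bsub>?G\<^esub> u \<otimes>\<^bsub>?G\<^esub> u \<otimes>\<^bsub>?G\<^esub> u"
      using cc by blast
  qed
  have TUw: "TU ?G w"
    unfolding TU_def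
  proof (intro conjI)
    show "w \<in> carrier ?G" by (rule wc)
    show "w \<noteq> \<one>\<^bsub>?G\<^esub>" unfolding w_def by (rule ne1c) auto
    show "w \<otimes>\<^bsub>?G\<^esub> w \<otimes>\<^bsub>?G\<^esub> w \<noteq> \<one>\<^bsub>?G\<^esub>"
      unfolding w_def PSL_mult[OF p1] by (simp add: ne1c)
    show "w \<otimes>\<^bsub>?G\<^esub> w \<otimes>\<^bsub>?G\<^esub> w \<otimes>\<^bsub>?G\<^esub> w \<otimes>\<^bsub>?G\<^esub> w \<noteq> \<one>\<^bsub>?G\<^esub>"
      unfolding w_def PSL_mult[OF p1] by (simp add: ne1c)
    have cc: "pii p (q,0,0,2) \<in> carrier ?G" by (rule pii_in[OF p1]) (simp add: q2 q2')
    have "pii p (q,0,0,2) \<otimes>\<^bsub>?G\<^esub> w \<otimes>\<^bsub>?G\<^esub> inv\<^bsub>?G\<^esub> (pii p (q,0,0,2)) = pii p (2*q, 0, 8, 2*q)"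
      unfolding w_def by (simp add: PSL_inv[OF p1] PSL_mult[OF p1] q2 q2')
    also have "\<dots> = pii p (1,0,8,1)" unfolding pii_eq[OF p1] by (simp add: q2 q2' mod_eq_dvd_iff)
    also have "\<dots> = w \<otimes>\<^bsub>?G\<^esub> w \<otimes>\<^bsub>?G\<^esub> w \<otimes>\<^bsub>?G\<^esub> w" unfolding w_def by (simp add: PSL_mult[OF p1])
    finally show "\<exists>c\<in>carrier ?G. c \<otimes>\<^bsub>?G\<^esub> w \<otimes>\<^bsub>?G\<^esub> inv\<^bsub>?G\<^esub> c = w \<otimes>\<^bsub>?G\<^esub> w \<otimes>\<^bsub>?G\<^esub> w \<otimes>\<^bsub>?G\<^esub> w"
      using cc by blast
  qed
  have z: "u \<otimes>\<^bsub>?G\<^esub> inv\<^bsub>?G\<^esub> w = pii p (-1, 1, -2, 1)"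
    unfolding u_def w_def by (simp add: PSL_inv[OF p1] PSL_mult[OF p1])
  have z1: "pii p (-1, 1, -2, 1) \<otimes>\<^bsub>?G\<^esub> pii p (-1, 1, -2, 1) = \<one>\<^bsub>?G\<^esub>"
    by (simp add: PSL_mult[OF p1] PSL_one_iff[OF p1] I2_def)
  have z2: "pii p (-1, 1, -2, 1) \<noteq> \<one>\<^bsub>?G\<^esub>" by (rule ne1b) auto
  have g: "pii p G0 = u \<otimes>\<^bsub>?G\<^esub> w" unfolding u_def w_def G0_def by (simp add: PSL_mult[OF p1])
  show ?thesis unfolding PP_def using TUu TUw z z1 z2 g by metis
qed

end

lemma ne_b: "1 < p \<Longrightarrow> \<not> int p dvd b \<Longrightarrow> pii p (a,b,c,d) \<noteq> \<one>\<^bsub>PSL2 p\<^esub>"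
proof
  assume p1: "1 < p" and b: "\<not> int p dvd b" and e: "pii p (a,b,c,d) = \<one>\<^bsub>PSL2 p\<^esub>"
  then have "md p (a,b,c,d) = md p (1,0,0,1) \<or> md p (a,b,c,d) = md p (-1,-0,-0,-1)"
    using PSL_one_iff[OF p1] by (simp add: I2_def)
  then have "int p dvd b" using md_b by fastforce
  then show False using b by blast
qed

theorem mainTheorem8:
  fixes p :: nat
  assumes "Factorial_Ring.prime p" and "p \<ge> 17"
  shows "\<not> amit_vishne (PSL2 p)"
proof
  assume av: "amit_vishne (PSL2 p)"
  note pr = assms(1) and p17 = assms(2)
  have p1: "1 < p" using pp1[OF pr p17] .
  have prI': "Factorial_Ring.prime (int p)" using ppI[OF pr p17] .
  interpret G: group "PSL2 p" by (rule PSL_group[OF p1])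
  have fin: "finite (carrier (PSL2 p))" unfolding PSL_carrier[OF p1] using SL2_fin by simp
  define g where "g = pii p G0"
  have gc: "g \<in> carrier (PSL2 p)" unfolding g_def by (rule pii_in[OF p1]) (simp add: G0_def)
  define n where "n = G.ord g"
  have n1: "1 \<le> n" unfolding n_def by (rule G.ord_ge_1[OF fin gc])
  have nd56: "\<not> int p dvd 56"
  proof
    assume "int p dvd 56"
    then have "int p dvd 7 * 8" by simp
    then have "int p dvd 7 \<or> int p dvd 8" using prime_dvd_mult_iff[OF prI'] by blast
    then show False using nd_small[OF pr p17, of 7] nd_small[OF pr p17, of 8] by auto
  qed
  have nd780: "\<not> int p dvd 780"
  proof
    assume "int p dvd 780"
    then have "int p dvd 12 * (5 * 13)" by simp
    then have "int p dvd 12 \<or> int p dvd 5 \<or> int p dvd 13" using prime_dvd_mult_iff[OF prI'] by blast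
    then show False using nd_small[OF pr p17, of 12] nd_small[OF pr p17, of 5] nd_small[OF pr p17, of 13] by auto
  qed
  have m4: "mpw G0 4 = (153, 56, 112, 41)" by (simp add: G0_def I2_def numeral_eq_Suc)
  have m6: "mpw G0 6 = (2131, 780, 1560, 571)" by (simp add: G0_def I2_def numeral_eq_Suc)
  have g4: "g [^]\<^bsub>PSL2 p\<^esub> (4::nat) \<noteq> \<one>\<^bsub>PSL2 p\<^esub>"
    unfolding g_def pii_pow[OF p1] m4 by (rule ne_b[OF p1 nd56])
  have g6: "g [^]\<^bsub>PSL2 p\<^esub> (6::nat) \<noteq> \<one>\<^bsub>PSL2 p\<^esub>"
    unfolding g_def pii_pow[OF p1] m6 by (rule ne_b[OF p1 nd780])
  have d4: "\<not> n dvd 4" and d6: "\<not> n dvd 6" using g4 g6 G.pow_eq_id[OF gc] n_def by auto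
  have "n \<noteq> 1 \<and> n \<noteq> 2 \<and> n \<noteq> 3 \<and> n \<noteq> 4" using d4 d6 by auto
  then have n5: "5 \<le> n" using n1 by auto
  have n6: "n \<noteq> 6" using d6 by auto
  obtain k where k: "coprime k n" "2 \<le> k" "k + 2 \<le> n" using choose_k[OF n5 n6] by blast
  define h where "h = g [^]\<^bsub>PSL2 p\<^esub> k"
  have hc: "h \<in> carrier (PSL2 p)" unfolding h_def using gc by simp
  have ordh: "G.ord h = n"
    using G.pow_ord_eq_ord_iff[OF fin gc, of k] k(1) unfolding n_def h_def by simp
  have gen: "generate (PSL2 p) {g} = generate (PSL2 p) {h}"
  proof -
    have "h = g [^]\<^bsub>PSL2 p\<^esub> (int k)" unfolding h_def by (simp add: int_pow_int)
    then have "h \<in> generate (PSL2 p) {g}" unfolding G.generate_pow[OF gc] by blast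
    then have sub: "generate (PSL2 p) {h} \<subseteq> generate (PSL2 p) {g}"
      using G.generate_subgroup_incl[of "{h}" "generate (PSL2 p) {g}"] G.generate_is_subgroup[of "{g}"] gc
      by blast
    have "card (generate (PSL2 p) {h}) = card (generate (PSL2 p) {g})"
      using G.generate_pow_card[OF hc] G.generate_pow_card[OF gc] ordh n_def by simp
    moreover have "finite (generate (PSL2 p) {g})"
      using G.generate_incl[of "{g}"] gc fin finite_subset by blast
    ultimately show ?thesis using sub by (metis card_subset_eq)
  qed
  obtain \<alpha> where al: "\<alpha> \<in> iso (PSL2 p) (PSL2 p)" "\<alpha> g = h"
    using av gc hc gen unfolding amit_vishne_def by blast
  have "PP (PSL2 p) (\<alpha> g)" using iso_PP[OF G.is_group al(1)] PP_g[OF pr p17] g_def by simp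
  then have PPh: "PP (PSL2 p) (pii p (mpw G0 k))"
    using al(2) unfolding h_def g_def pii_pow[OF p1] by simp
  have dH: "det2 (mpw G0 k) = 1" by (simp add: mpw_det G0_def)
  have "int p dvd tr (mpw G0 k) - 4 \<or> int p dvd tr (mpw G0 k) + 4"
    using PP_tr[OF pr p17 PPh] dH by simp
  then have "pii p (mpw G0 k) = pii p G0 \<or> pii p (mpw G0 k) = pii p (adj G0)"
    using comm_G0[OF pr p17 mpw_comm dH] by blast
  moreover have "pii p (adj G0) = inv\<^bsub>PSL2 p\<^esub> g"
    unfolding g_def by (rule PSL_inv[OF p1, symmetric]) (simp add: G0_def)
  moreover have "h = pii p (mpw G0 k)" unfolding h_def g_def by (rule pii_pow[OF p1])
  ultimately have hg: "h = g \<or> h = inv\<^bsub>PSL2 p\<^esub> g" unfolding g_def by auto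
  obtain j where j: "k = Suc j" using k(2) by (cases k) auto
  have "h \<noteq> g"
  proof
    assume "h = g"
    then have "g [^]\<^bsub>PSL2 p\<^esub> j \<otimes>\<^bsub>PSL2 p\<^esub> g = g" unfolding h_def j by simp
    then have "g [^]\<^bsub>PSL2 p\<^esub> j = \<one>\<^bsub>PSL2 p\<^esub>" using gc by simp
    then have "n dvd j" using G.pow_eq_id[OF gc] n_def by simp
    moreover have "0 < j" "j < n" using j k by auto
    ultimately show False using dvd_imp_le by fastforce
  qed
  moreover have "h \<noteq> inv\<^bsub>PSL2 p\<^esub> g"
  proof
    assume "h = inv\<^bsub>PSL2 p\<^esub> g"
    then have "g [^]\<^bsub>PSL2 p\<^esub> (Suc k) = \<one>\<^bsub>PSL2 p\<^esub>" unfolding h_def using gc by simp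
    then have "n dvd Suc k" unfolding n_def using G.pow_eq_id[OF gc, of "Suc k"] by blast
    moreover have "0 < Suc k" "Suc k < n" using k by auto
    ultimately show False using dvd_imp_le by fastforce
  qed
  ultimately show False using hg by blast
qed

end
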